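(* Let $\vec{k}=(k_1,\dots,k_n)$ be a vector of positive integers, let $\mathcal{K}$ be the set of all vectors obtained by permuting the entries of $\vec{k}$, and let $\mathcal{D}_{\mathcal{K}}=\bigcup_{\vec{k}'\in\mathcal{K}}\mathcal{D}_{\vec{k}'}$. For every $\overline{D}\in\mathcal{D}_{\mathcal{K}}$, with sweep map image $D=\Phi(\overline{D})$, we have $$\operatorname{dinv}(\overline{D})=\operatorname{area}(D)\qquad\text{and}\qquad \operatorname{area}(\overline{D})=\operatorname{bounce}(D).$$
   Context: For a vector $\vec{k}=(k_1,\dots,k_n)$ of positive integers put $|\vec{k}|=\sum_i k_i$. A $\vec{k}$-Dyck path is a word $D=\sigma_1\sigma_2\cdots\sigma_N$, $N=|\vec{k}|+n$, consisting of $n$ "red arrows" (north/up steps) and $|\vec{k}|$ "blue arrows" $W$ (east/down steps), where the $j$-th red arrow from the left is $S^{k_j}$, of length $\ell(S^{k_j})=k_j$; a red arrow $S^{k_j}$ has value $k_j$ and each $W$ has value $-1$. Define ranks $r_1=0$ and $r_{m+1}=r_m+(\text{value of }\sigma_m)$; it is required that $r_m\ge 0$ for all $m$ (then $r_{N+1}=0$). The starting rank of the step $\sigma_m$ is $r(\sigma_m)=r_m$ and its end rank is $\dot r(\sigma_m)=r_{m+1}$. Geometrically (model 3), $D$ is the lattice path from $(0,0)$ to $(N,0)$ never below the horizontal axis, with up steps $(1,k_j)$ and down steps $(1,-1)$, and ranks are the $y$-coordinates of starting points. Equivalently (model 1), $D$ is a lattice path from $(0,0)$ to $(|\vec{k}|,|\vec{k}|)$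 never below $y=x$, with north steps of lengths $k_1,\dots,k_n$ (bottom to top) and unit east steps; the rank of a vertex is $y-x$. Let $\mathcal{D}_{\vec{k}}$ be the set of $\vec{k}$-Dyck paths. For steps $A,B$ of $D$, write $A<B$ if $A$ is to the left of $B$, and $A<^sB$ (sweep order) if $r(A)<r(B)$, or $r(A)=r(B)$ and $B<A$. Sweep map: $\Phi(\overline{D})$ is the word obtained by listing the steps of $\overline{D}$ in increasing sweep order (bottom to top by starting rank, right to left at equal rank). For $\overline{D}\in\mathcal{D}_{\vec{k}}$, $\Phi(\overline{D})$ is a $\vec{k}'$-Dyck path for some rearrangement $\vec{k}'$ of $\vec{k}$, and $\Phi$ is a bijection of $\mathcal{D}_{\mathcal{K}}$ to itself. Area: $\operatorname{area}(D)=\sum_{S} r(S)$, summed over all red arrows $S$ of $D$. Dinv: $\operatorname{dinv}(D)$ is the sum of two parts. (1) Sweep dinv: the number of pairs $(W,S)$ with $W$ a blue arrow, $S$ a red arrow, $W<S$, such that $W$ sweeps $S$, i.e. $W$ intersects $S$ when $W$ is moved to the right past $S$ along a line of slope $\epsilon$, $0<\epsilon\ll1$; equivalently $r(S)\le r(W)\le \dot r(S)$. (2) Red dinv: $\sum_{S_i<S_j}\chi\big(r(S_i)\ge r(S_j)\ \&\ \dot r(S_j)>\dot r(S_i)\big)(\dot r(S_j)-\dot r(S_i))+\sum_{S_i<S_j}\chi\big(r(S_i)<r(S_j)\ \&\ \dot r(S_j)<\dot r(S_i)\big)(\dot r(S_i)-\dot r(S_j))$, over pairs of red arrows. Bounce: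 let $D$ be a $\vec{k}'$-Dyck path with red arrow lengths $k'_1,\dots,k'_n$ (left to right), $|\vec{k}'|=K$. For $0\le x<K$ let $N(x)$ be the number of red arrows preceding the $(x+1)$-st letter $W$ of $D$ (in model 1: the number of north steps before the unique east step starting at abscissa $x$). Build a tableau with $n$ columns, column $j$ having $k'_j+1$ cells whose entries are $t_j,t_j+1,\dots,t_j+k'_j$ from top to bottom, where the top entries $t_j$ are assigned as follows. Set $x_0=0$, $v_0=N(0)$, and give top entry $0$ to columns $1,\dots,v_0$. Recursively, for $i\ge0$, let $h_i$ be the number of cells with entry $i+1$ among the columns filled so far and $x_{i+1}=x_i+h_i$; if $x_{i+1}=K$, stop; otherwise let $v_{i+1}=N(x_{i+1})-N(x_i)$ and give top entry $i+1$ to columns $N(x_i)+1,\dots,N(x_{i+1})$. Then $\operatorname{bounce}(D)=\sum_{i\ge0} i\,v_i$, the sum of the top entries. *)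

theory Defs
  imports Main "HOL-Library.Multiset" "HOL-Library.Product_Lexorder"
begin

text \<open>A step of a path: a red arrow S^k (north/up step of length k) or a blue arrow W.\<close>
datatype step = Red nat | Blue

fun is_red :: "step \<Rightarrow> bool" where
  "is_red (Red _) = True" | "is_red Blue = False"

fun val :: "step \<Rightarrow> int" where
  "val (Red k) = int k" | "val Blue = -1"

definition red_lengths :: "step list \<Rightarrow> nat list" where
  "red_lengths D = [k. Red k \<leftarrow> D]"

text \<open>Starting rank of the step at (0-based) position m: r_{m+1} in the paper;
  rank D (length D) is the final rank.\<close>
definition rank :: "step list \<Rightarrow> nat \<Rightarrow> int" where
  "rank D m = sum_list (map val (take m D))"

definition erank :: "step list \<Rightarrow> nat \<Rightarrow> int" where
  "erank D m = rank D (Suc m)"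

definition is_kdyck :: "nat list \<Rightarrow> step list \<Rightarrow> bool" where
  "is_kdyck ks D \<longleftrightarrow> red_lengths D = ks \<and> count_list D Blue = sum_list ks
     \<and> (\<forall>m \<le> length D. rank D m \<ge> 0)"

definition Dyck_K :: "nat list \<Rightarrow> step list set" where
  "Dyck_K ks = {D. \<exists>ks'. mset ks' = mset ks \<and> is_kdyck ks' D}"

definition sweep :: "step list \<Rightarrow> step list" where
  "sweep D = map (\<lambda>m. D ! m) (sort_key (\<lambda>m. (rank D m, - int m)) [0..<length D])"

definition area :: "step list \<Rightarrow> int" where
  "area D = (\<Sum>m\<in>{m. m < length D \<and> is_red (D ! m)}. rank D m)"

definition sweep_dinv :: "step list \<Rightarrow> nat" where
  "sweep_dinv D = card {(i, j). i < j \<and> j < length D \<and> D ! i = Blue \<and> is_red (D ! j)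
      \<and> rank D j \<le> rank D i \<and> rank D i \<le> erank D j}"

definition red_dinv :: "step list \<Rightarrow> int" where
  "red_dinv D =
     (\<Sum>(i, j)\<in>{(i, j). i < j \<and> j < length D \<and> is_red (D ! i) \<and> is_red (D ! j)}.
        (if rank D i \<ge> rank D j \<and> erank D j > erank D i then erank D j - erank D i else 0)
      + (if rank D i < rank D j \<and> erank D j < erank D i then erank D i - erank D j else 0))"

definition dinv :: "step list \<Rightarrow> int" where
  "dinv D = int (sweep_dinv D) + red_dinv D"

text \<open>N(x): number of red arrows preceding the (x+1)-st letter W (x 0-based).\<close>
definition Nred :: "step list \<Rightarrow> nat \<Rightarrow> nat" where
  "Nred D x = (let p = filter (\<lambda>m. D ! m = Blue) [0..<length D] ! x
               in length (filter is_red (take p D)))"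

text \<open>State after stage i: (stopped, x_i, number of columns filled
  = N(x_i), top entries of columns (0-based column indices)).  Column j has cells with
  entries t_j, ..., t_j + k'_j.\<close>
fun bstate :: "step list \<Rightarrow> nat \<Rightarrow> bool \<times> nat \<times> nat \<times> (nat \<Rightarrow> nat)" where
  "bstate D 0 = (False, 0, Nred D 0, (\<lambda>j. 0))"
| "bstate D (Suc i) =
     (case bstate D i of (dn, x, c, t) \<Rightarrow>
        if dn then (dn, x, c, t)
        else (let h = card {j. j < c \<and> t j \<le> Suc i \<and> Suc i \<le> t j + red_lengths D ! j};
                  x' = x + h
              in if x' = sum_list (red_lengths D) then (True, x', c, t)
                 else (False, x', Nred D x',
                       (\<lambda>j. if c \<le> j \<and> j < Nred D x' then Suc i else t j))))"

definition bounce :: "step list \<Rightarrow> int" where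
  "bounce D = (case bstate D (LEAST i. fst (bstate D i)) of (dn, x, c, t) \<Rightarrow>
                 int (\<Sum>j < length (red_lengths D). t j))"

end

theory Submission
  imports Defs
begin



fun len :: "step \<Rightarrow> nat" where "len (Red k) = k" | "len Blue = 0"

lemma val_cases: "val s = (if is_red s then int (len s) else -1)" by (cases s) auto
lemma not_red_iff: "(\<not> is_red s) \<longleftrightarrow> s = Blue" by (cases s) auto

lemma rank_0[simp]: "rank D 0 = 0" by (simp add: rank_def)
lemma rank_Suc: "m < length D \<Longrightarrow> rank D (Suc m) = rank D m + val (D!m)"
  by (simp add: rank_def take_Suc_conv_app_nth)
lemma rank_sum: "m \<le> length D \<Longrightarrow> rank D m = (\<Sum>i<m. val (D!i))"
  by (induction m) (auto simp: rank_Suc)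

lemma red_lengths_conv: "red_lengths L = map len (filter is_red L)"
  by (induction L) (auto simp: red_lengths_def split: step.splits)

lemma sum_val: "sum_list (map val L) = int (sum_list (red_lengths L)) - int (count_list L Blue)"
  by (induction L) (auto simp: red_lengths_conv val_cases not_red_iff)

definition good :: "step list \<Rightarrow> bool" where
  "good D \<longleftrightarrow> (\<forall>m \<le> length D. rank D m \<ge> 0) \<and> rank D (length D) = 0
     \<and> (\<forall>m < length D. is_red (D!m) \<longrightarrow> len (D!m) > 0)"

lemma good_of_Dyck:
  assumes "\<forall>k \<in> set ks. k > 0" and "D \<in> Dyck_K ks"
  shows "good D"
proof -
  obtain ks' where ks': "mset ks' = mset ks" "is_kdyck ks' D" using assms(2) by (auto simp: Dyck_K_def)
  have st: "set ks' = set ks" using ks'(1) by (metis set_mset_mset)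
  have "rank D (length D) = 0" using ks'(2) sum_val[of D] by (simp add: rank_def is_kdyck_def)
  moreover have "len (D!m) > 0" if "m < length D" "is_red (D!m)" for m
  proof -
    have "D!m \<in> set (filter is_red D)" using that by auto
    then have "len (D!m) \<in> set (red_lengths D)" by (simp add: red_lengths_conv)
    then show ?thesis using ks'(2) st assms(1) by (auto simp: is_kdyck_def)
  qed
  ultimately show ?thesis using ks'(2) by (auto simp: good_def is_kdyck_def)
qed




definition skey :: "step list \<Rightarrow> nat \<Rightarrow> int \<times> int" where "skey D m = (rank D m, - int m)"
definition sxs :: "step list \<Rightarrow> nat list" where "sxs D = sort_key (skey D) [0..<length D]"

lemma sweep_sxs: "sweep D = map (\<lambda>m. D!m) (sxs D)" by (simp add: sweep_def sxs_def skey_def[abs_def])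
lemma sxs_len[simp]: "length (sxs D) = length D" by (simp add: sxs_def)
lemma sxs_set[simp]: "set (sxs D) = {..<length D}" by (auto simp: sxs_def)
lemma sxs_distinct: "distinct (sxs D)" by (simp add: sxs_def)
lemma skey_inj: "skey D x = skey D y \<Longrightarrow> x = y" by (simp add: skey_def)

lemma sxs_mono: assumes "p < q" "q < length D" shows "skey D (sxs D ! p) < skey D (sxs D ! q)"
proof -
  have "sorted (map (skey D) (sxs D))" by (simp add: sxs_def)
  then have "skey D (sxs D ! p) \<le> skey D (sxs D ! q)" using assms
    by (metis (no_types, lifting) dual_order.strict_trans length_map nth_map order_less_imp_le sorted_nth_mono sxs_len)
  moreover have "sxs D ! p \<noteq> sxs D ! q" using assms sxs_distinct[of D]
    by (simp add: nth_eq_iff_index_eq)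
  ultimately show ?thesis using skey_inj by (metis order_le_imp_less_or_eq)
qed

lemma prefix_image:
  fixes f :: "'a \<Rightarrow> 'b::linorder"
  assumes "distinct ys" "\<And>p q. p < q \<Longrightarrow> q < length ys \<Longrightarrow> f (ys!p) < f (ys!q)" "j < length ys"
  shows "(!) ys ` {..<j} = {y \<in> set ys. f y < f (ys!j)}"
proof (intro equalityI subsetI)
  fix y assume "y \<in> (!) ys ` {..<j}"
  then obtain p where "p < j" "y = ys!p" by auto
  then show "y \<in> {y \<in> set ys. f y < f (ys!j)}" using assms by auto
next
  fix y assume y: "y \<in> {y \<in> set ys. f y < f (ys!j)}"
  then obtain p where p: "p < length ys" "y = ys!p" by (auto simp: in_set_conv_nth)
  have "p < j"
  proof (rule ccontr)
    assume "\<not> p < j"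
    then have "p = j \<or> j < p" by auto
    then show False using assms(2)[of j p] p y assms(3) by auto
  qed
  then show "y \<in> (!) ys ` {..<j}" using p by auto
qed

lemma sum_filter_lt: "(\<Sum>m | m < (N::nat) \<and> P m. f m) = (\<Sum>m<N. if P m then f m else 0)"
proof -
  have "{m. m < N \<and> P m} = {m \<in> {..<N}. P m}" by auto
  then show ?thesis by (simp only: sum.inter_filter[symmetric] finite_lessThan)
qed

lemma rank_sweep:
  assumes "p < length D"
  shows "rank (sweep D) p = (\<Sum>m<length D. if skey D m < skey D (sxs D ! p) then val (D!m) else 0)"
proof -
  let ?xs = "sxs D"
  have "rank (sweep D) p = (\<Sum>i<p. val (sweep D ! i))" using assms by (simp add: rank_sum sweep_sxs)
  also have "\<dots> = (\<Sum>i<p. val (D ! (?xs ! i)))" using assms by (simp add: sweep_sxs)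
  also have "\<dots> = (\<Sum>m\<in>(!) ?xs ` {..<p}. val (D ! m))"
    by (subst sum.reindex) (use assms sxs_distinct[of D] in \<open>auto intro!: inj_on_nth\<close>)
  also have "(!) ?xs ` {..<p} = {m \<in> {..<length D}. skey D m < skey D (?xs ! p)}"
    using prefix_image[of ?xs "skey D" p] sxs_distinct[of D] sxs_mono[of _ _ D] assms by simp
  also have "(\<Sum>m\<in>{m \<in> {..<length D}. skey D m < skey D (?xs ! p)}. val (D ! m))
     = (\<Sum>m<length D. if skey D m < skey D (?xs ! p) then val (D!m) else 0)"
    by (simp add: sum_filter_lt)
  finally show ?thesis .
qed

definition Lsum :: "step list \<Rightarrow> nat \<Rightarrow> int" where
  "Lsum D j = (\<Sum>m<length D. if skey D m < skey D j then val (D!m) else 0)"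

lemma area_sweep: "area (sweep D) = (\<Sum>j<length D. if is_red (D!j) then Lsum D j else 0)"
proof -
  let ?xs = "sxs D" and ?N = "length D"
  have 1: "area (sweep D) = (\<Sum>p\<in>{p \<in> {..<?N}. is_red (D!(?xs!p))}. rank (sweep D) p)"
    unfolding area_def by (rule sum.cong) (auto simp: sweep_sxs)
  have 2: "(\<Sum>p\<in>{p \<in> {..<?N}. is_red (D!(?xs!p))}. rank (sweep D) p) = (\<Sum>p<?N. if is_red (D!(?xs!p)) then Lsum D (?xs!p) else 0)"
  proof (simp only: sum.inter_filter[OF finite_lessThan], rule sum.cong, rule refl)
    fix p assume "p \<in> {..<?N}"
    then show "(if is_red (D!(?xs!p)) then rank (sweep D) p else 0) = (if is_red (D!(?xs!p)) then Lsum D (?xs!p) else 0)"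
      using rank_sweep[of p D] unfolding Lsum_def by simp
  qed
  have inj: "inj_on ((!) ?xs) {..<?N}" by (rule inj_on_nth) (auto simp: sxs_distinct)
  have 3: "(\<Sum>p<?N. if is_red (D!(?xs!p)) then Lsum D (?xs!p) else 0) = (\<Sum>j\<in>(!) ?xs ` {..<?N}. if is_red (D!j) then Lsum D j else 0)"
    by (simp only: sum.reindex[OF inj] o_def)
  have 4: "(!) ?xs ` {..<?N} = {..<?N}"
    by (metis bij_betw_imp_surj_on bij_betw_nth sxs_distinct sxs_len sxs_set)
  show ?thesis using 1 2 3 4 by simp
qed




lemma telescope:
  fixes \<phi> :: "int \<Rightarrow> int"
  assumes "p \<le> q"
  shows "(\<Sum>m\<in>{p..<q}. \<phi> (rank D (Suc m)) - \<phi> (rank D m)) = \<phi> (rank D q) - \<phi> (rank D p)"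
  using sum_Suc_diff'[OF assms, of "\<lambda>m. \<phi> (rank D m)"] by simp

lemma sum_gt: "(\<Sum>m<(N::nat). if j < m then f m else 0) = (\<Sum>m\<in>{Suc j..<N}. f m)"
proof -
  have "{m \<in> {..<N}. j < m} = {Suc j..<N}" by auto
  then show ?thesis by (metis (no_types) sum.inter_filter finite_lessThan)
qed

lemma sum_lt: "j \<le> N \<Longrightarrow> (\<Sum>m<(N::nat). if m < j then f m else 0) = (\<Sum>m\<in>{0..<j}. f m)"
proof -
  assume "j \<le> N"
  then have "{m \<in> {..<N}. m < j} = {0..<j}" by auto
  then show ?thesis by (metis (no_types) sum.inter_filter finite_lessThan)
qed

definition Fp :: "int \<Rightarrow> int \<Rightarrow> bool \<Rightarrow> int \<Rightarrow> int \<Rightarrow> int" where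
  "Fp rm em mgt a b = (if rm < a \<or> (rm = a \<and> mgt) then em - rm else 0)
     - (min em (a - 1) - min rm (a - 1))
     - (if mgt then (if em \<ge> a then 1 else 0) - (if rm \<ge> a then 1 else 0) else 0)
     - (if mgt then 0 else max (a - 1) (min em b) - max (a - 1) (min rm b))"

definition Bsum :: "step list \<Rightarrow> nat \<Rightarrow> int" where
  "Bsum D j = (\<Sum>m<length D. if m < j \<and> D!m = Blue \<and> rank D j \<le> rank D m \<and> rank D m \<le> rank D (Suc j) then 1 else 0)"

lemma skey_less: "skey D m < skey D j \<longleftrightarrow> rank D m < rank D j \<or> (rank D m = rank D j \<and> j < m)"
  by (auto simp: skey_def less_prod_def)

lemma good_rank_nonneg: "good D \<Longrightarrow> m \<le> length D \<Longrightarrow> rank D m \<ge> 0"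
  by (simp add: good_def)

lemma per_red:
  assumes g: "good D" and j: "j < length D" "is_red (D!j)"
  shows "Lsum D j - Bsum D j = (\<Sum>m<length D. if is_red (D!m) \<and> m \<noteq> j then Fp (rank D m) (rank D (Suc m)) (j < m) (rank D j) (rank D (Suc j)) else 0)"
proof -
  define N where "N = length D"
  define a where "a = rank D j"
  define b where "b = rank D (Suc j)"
  have a0: "a \<ge> 0" using g j by (simp add: a_def good_def)
  have ab: "a < b" using g j by (auto simp: a_def b_def rank_Suc val_cases good_def)
  define \<phi>1 :: "int \<Rightarrow> int" where "\<phi>1 x = min x (a - 1)" for x
  define \<phi>2 :: "int \<Rightarrow> int" where "\<phi>2 x = (if x \<ge> a then 1 else 0)" for x
  define \<phi>3 :: "int \<Rightarrow> int" where "\<phi>3 x = max (a - 1) (min x b)" for x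
  define A where "A m = (if skey D m < skey D j then val (D!m) else 0)" for m
  define B where "B m = (if m < j \<and> D!m = Blue \<and> a \<le> rank D m \<and> rank D m \<le> b then 1 else (0::int))" for m
  define C1 where "C1 m = \<phi>1 (rank D (Suc m)) - \<phi>1 (rank D m)" for m
  define C2 where "C2 m = (if j < m then \<phi>2 (rank D (Suc m)) - \<phi>2 (rank D m) else 0)" for m
  define C3 where "C3 m = (if m < j then \<phi>3 (rank D (Suc m)) - \<phi>3 (rank D m) else 0)" for m
  have rN: "rank D N = 0" using g by (simp add: good_def N_def)
  have S1: "(\<Sum>m<N. C1 m) = 0"
    using telescope[of 0 N \<phi>1 D] rN by (simp add: C1_def lessThan_atLeast0)
  have S2: "(\<Sum>m<N. C2 m) = \<phi>2 0 - \<phi>2 b"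
    unfolding C2_def sum_gt using telescope[of "Suc j" N \<phi>2 D] rN j by (simp add: b_def N_def)
  have S3: "(\<Sum>m<N. C3 m) = \<phi>3 a - \<phi>3 0"
  proof -
    have "j \<le> N" using j by (simp add: N_def)
    then show ?thesis unfolding C3_def sum_lt[OF \<open>j \<le> N\<close>] using telescope[of 0 j \<phi>3 D] by (simp add: a_def)
  qed
  have tot: "\<phi>2 0 - \<phi>2 b + (\<phi>3 a - \<phi>3 0) = 0"
    using a0 ab by (simp add: \<phi>2_def \<phi>3_def)
  have sumQ: "(\<Sum>m<N. A m - B m - C1 m - C2 m - C3 m) = Lsum D j - Bsum D j"
    using S1 S2 S3 tot
    by (simp add: sum_subtractf A_def[abs_def] B_def[abs_def] Lsum_def Bsum_def N_def a_def b_def)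
  have ptw: "A m - B m - C1 m - C2 m - C3 m = (if is_red (D!m) \<and> m \<noteq> j then Fp (rank D m) (rank D (Suc m)) (j < m) a b else 0)"
    if m: "m < N" for m
  proof (cases "is_red (D!m)")
    case red: True
    have v: "val (D!m) = rank D (Suc m) - rank D m" using m by (simp add: rank_Suc N_def)
    have nb: "D!m \<noteq> Blue" using red by auto
    show ?thesis
    proof (cases "m = j")
      case True then show ?thesis using ab
        by (simp add: A_def B_def C1_def C2_def C3_def \<phi>1_def b_def[symmetric] a_def[symmetric])
    next
      case False
      then show ?thesis using red v nb
        by (auto simp: A_def B_def C1_def C2_def C3_def \<phi>1_def \<phi>2_def \<phi>3_def Fp_def skey_less a_def[symmetric])
    qed
  next
    case False
    then have bl: "D!m = Blue" by (simp add: not_red_iff)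
    then have e: "rank D (Suc m) = rank D m - 1" using m by (simp add: rank_Suc N_def)
    have "rank D (Suc m) \<ge> 0" using g m by (simp add: good_def N_def)
    moreover have "m \<noteq> j" using bl j by auto
    ultimately show ?thesis using bl e False
      by (auto simp: A_def B_def C1_def C2_def C3_def \<phi>1_def \<phi>2_def \<phi>3_def skey_less a_def[symmetric] b_def[symmetric])
  qed
  have "(\<Sum>m<N. A m - B m - C1 m - C2 m - C3 m) = (\<Sum>m<N. if is_red (D!m) \<and> m \<noteq> j then Fp (rank D m) (rank D (Suc m)) (j < m) a b else 0)"
    by (rule sum.cong[OF refl]) (simp only: ptw lessThan_iff)
  then have "Lsum D j - Bsum D j = (\<Sum>m<N. if is_red (D!m) \<and> m \<noteq> j then Fp (rank D m) (rank D (Suc m)) (j < m) a b else 0)"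
    using sumQ by simp
  then show ?thesis by (simp only: N_def a_def b_def)
qed




lemma pair_id:
  fixes ri ei rj ej :: int
  assumes "ri < ei" "rj < ej"
  shows "Fp ri ei False rj ej + Fp rj ej True ri ei =
    (if ri \<ge> rj \<and> ej > ei then ej - ei else 0) + (if ri < rj \<and> ej < ei then ei - ej else 0)"
  using assms unfolding Fp_def by (auto simp: min_def max_def)

lemma sum_filter_prod:
  fixes f :: "nat \<Rightarrow> nat \<Rightarrow> 'a::comm_monoid_add"
  shows "(\<Sum>(i, j)\<in>{(i, j). P i j \<and> i < N \<and> j < N}. f i j) = (\<Sum>i<N. \<Sum>j<N. if P i j then f i j else 0)"
proof -
  have "{(i, j). P i j \<and> i < N \<and> j < N} = {x \<in> {..<N} \<times> {..<N}. P (fst x) (snd x)}" by auto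
  then have "(\<Sum>(i, j)\<in>{(i, j). P i j \<and> i < N \<and> j < N}. f i j) = (\<Sum>x\<in>{..<N} \<times> {..<N}. if P (fst x) (snd x) then f (fst x) (snd x) else 0)"
    by (simp add: sum.inter_filter[symmetric] split_beta)
  also have "\<dots> = (\<Sum>i<N. \<Sum>j<N. if P i j then f i j else 0)"
    by (simp add: sum.cartesian_product split_beta)
  finally show ?thesis .
qed

lemma H_false_case:
  fixes H :: "nat \<Rightarrow> nat \<Rightarrow> int" and R :: "nat \<Rightarrow> bool"
  assumes H_def: "\<And>m j. H m j = (if R m \<and> R j \<and> m \<noteq> j then F m j else 0)"
  and False: "\<not> (m < j \<and> R m \<and> R j)"
  shows "(if m < j then H m j else 0) + (if m < j then H j m else 0) = (if m < j \<and> R m \<and> R j then G m j else 0)"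
proof -
  have r: "(if m < j \<and> R m \<and> R j then G m j else 0) = 0" by (rule if_not_P[OF False])
  show ?thesis
  proof (cases "m < j")
    case True
    then have "\<not> (R m \<and> R j)" using False by blast
    then have "H m j = 0" "H j m = 0" unfolding H_def by auto
    then show ?thesis using True r by simp
  next
    case False
    then show ?thesis using r by simp
  qed
qed

lemma H_true_case:
  fixes H :: "nat \<Rightarrow> nat \<Rightarrow> int" and R :: "nat \<Rightarrow> bool"
  assumes H_def: "\<And>m j. H m j = (if R m \<and> R j \<and> m \<noteq> j then F m j else 0)"
  and T: "m < j" "R m" "R j" and G: "F m j + F j m = G m j"
  shows "(if m < j then H m j else 0) + (if m < j then H j m else 0) = (if m < j \<and> R m \<and> R j then G m j else 0)"
proof -
  have "H m j = F m j" "H j m = F j m" using T unfolding H_def by auto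
  then show ?thesis using T G by simp
qed

lemma dsum_distrib:
  fixes f g :: "nat \<Rightarrow> nat \<Rightarrow> int"
  shows "(\<Sum>j\<in>A. \<Sum>m\<in>B. f m j + g m j) = (\<Sum>j\<in>A. \<Sum>m\<in>B. f m j) + (\<Sum>j\<in>A. \<Sum>m\<in>B. g m j)"
  by (simp add: sum.distrib)

lemma red_pos: "good D \<Longrightarrow> m < length D \<Longrightarrow> is_red (D!m) \<Longrightarrow> rank D m < rank D (Suc m)"
  by (auto simp: good_def rank_Suc val_cases)

lemma part1:
  assumes g: "good D"
  shows "dinv D = area (sweep D)"
proof -
  define N where "N = length D"
  define R where "R m = is_red (D!m)" for m
  define F' where "F' m j = Fp (rank D m) (rank D (Suc m)) (j < m) (rank D j) (rank D (Suc j))" for m j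
  define H where "H m j = (if R m \<and> R j \<and> m \<noteq> j then F' m j else 0)" for m j
  define G where "G i j = (if rank D i \<ge> rank D j \<and> rank D (Suc j) > rank D (Suc i) then rank D (Suc j) - rank D (Suc i) else 0)
      + (if rank D i < rank D j \<and> rank D (Suc j) < rank D (Suc i) then rank D (Suc i) - rank D (Suc j) else 0)" for i j
  have sd: "int (sweep_dinv D) = (\<Sum>j<N. if R j then Bsum D j else 0)"
  proof -
    have "{(i, j). i < j \<and> j < length D \<and> D ! i = Blue \<and> is_red (D ! j)
      \<and> rank D j \<le> rank D i \<and> rank D i \<le> erank D j} =
      {(i, j). (i < j \<and> D ! i = Blue \<and> is_red (D ! j)
      \<and> rank D j \<le> rank D i \<and> rank D i \<le> erank D j) \<and> i < N \<and> j < N}" by (auto simp: N_def)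
    then have "sweep_dinv D = (\<Sum>(i, j)\<in>{(i, j). (i < j \<and> D ! i = Blue \<and> is_red (D ! j)
      \<and> rank D j \<le> rank D i \<and> rank D i \<le> erank D j) \<and> i < N \<and> j < N}. 1)"
      by (simp add: sweep_dinv_def)
    also have "\<dots> = (\<Sum>i<N. \<Sum>j<N. if (i < j \<and> D ! i = Blue \<and> is_red (D ! j)
      \<and> rank D j \<le> rank D i \<and> rank D i \<le> erank D j) then 1 else 0)"
      by (rule sum_filter_prod)
    also have "\<dots> = (\<Sum>j<N. \<Sum>i<N. if (i < j \<and> D ! i = Blue \<and> is_red (D ! j)
      \<and> rank D j \<le> rank D i \<and> rank D i \<le> erank D j) then 1 else 0)"
      by (rule sum.swap)
    finally have "int (sweep_dinv D) = (\<Sum>j<N. \<Sum>i<N. if (i < j \<and> D ! i = Blue \<and> is_red (D ! j)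
      \<and> rank D j \<le> rank D i \<and> rank D i \<le> erank D j) then 1 else 0)"
      by (simp add: of_nat_sum, simp only: if_distrib[where f=int] of_nat_1 of_nat_0)
    also have "\<dots> = (\<Sum>j<N. if R j then Bsum D j else 0)"
      by (rule sum.cong[OF refl]) (auto simp: Bsum_def R_def N_def erank_def intro!: sum.cong)
    finally show ?thesis .
  qed
  have rd: "red_dinv D = (\<Sum>j<N. \<Sum>i<N. if i < j \<and> R i \<and> R j then G i j else 0)"
  proof -
    have "{(i, j). i < j \<and> j < length D \<and> is_red (D ! i) \<and> is_red (D ! j)} =
      {(i, j). (i < j \<and> R i \<and> R j) \<and> i < N \<and> j < N}" by (auto simp: N_def R_def)
    then have "red_dinv D = (\<Sum>(i, j)\<in>{(i, j). (i < j \<and> R i \<and> R j) \<and> i < N \<and> j < N}. G i j)"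
      unfolding red_dinv_def erank_def G_def by simp
    also have "\<dots> = (\<Sum>i<N. \<Sum>j<N. if i < j \<and> R i \<and> R j then G i j else 0)"
      by (rule sum_filter_prod)
    also have "\<dots> = (\<Sum>j<N. \<Sum>i<N. if i < j \<and> R i \<and> R j then G i j else 0)"
      by (rule sum.swap)
    finally show ?thesis .
  qed
  have ar: "area (sweep D) = (\<Sum>j<N. if R j then Bsum D j else 0) + (\<Sum>j<N. \<Sum>m<N. H m j)"
  proof -
    have "area (sweep D) = (\<Sum>j<N. if R j then Lsum D j else 0)" by (simp add: area_sweep N_def R_def)
    also have "\<dots> = (\<Sum>j<N. (if R j then Bsum D j else 0) + (\<Sum>m<N. H m j))"
    proof (rule sum.cong[OF refl])
      fix j assume j: "j \<in> {..<N}"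
      show "(if R j then Lsum D j else 0) = (if R j then Bsum D j else 0) + (\<Sum>m<N. H m j)"
      proof (cases "R j")
        case True
        have eq: "(\<Sum>m<N. H m j) = (\<Sum>m<N. if R m \<and> m \<noteq> j then F' m j else 0)"
          by (rule sum.cong[OF refl]) (simp add: H_def True)
        have pr: "Lsum D j - Bsum D j = (\<Sum>m<N. if R m \<and> m \<noteq> j then F' m j else 0)"
          using per_red[OF g, of j] j True unfolding N_def R_def F'_def by simp
        show ?thesis using eq pr True by simp
      next
        case False
        then show ?thesis by (simp add: H_def)
      qed
    qed
    also have "\<dots> = (\<Sum>j<N. if R j then Bsum D j else 0) + (\<Sum>j<N. \<Sum>m<N. H m j)"
      by (simp add: sum.distrib)
    finally show ?thesis .
  qed
  have sym: "(\<Sum>j<N. \<Sum>m<N. H m j) = (\<Sum>j<N. \<Sum>m<N. if m < j \<and> R m \<and> R j then G m j else 0)"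
  proof -
    have "(\<Sum>j<N. \<Sum>m<N. H m j) = (\<Sum>j<N. \<Sum>m<N. (if m < j then H m j else 0) + (if j < m then H m j else 0))"
    proof (intro sum.cong refl)
      fix j m
      show "H m j = (if m < j then H m j else 0) + (if j < m then H m j else 0)"
        by (cases "m < j"; cases "j < m") (simp_all add: H_def)
    qed
    also have "\<dots> = (\<Sum>j<N. \<Sum>m<N. if m < j then H m j else 0) + (\<Sum>j<N. \<Sum>m<N. if j < m then H m j else 0)"
      by (rule dsum_distrib)
    also have "(\<Sum>j<N. \<Sum>m<N. if j < m then H m j else 0) = (\<Sum>m<N. \<Sum>j<N. if j < m then H m j else 0)"
      by (rule sum.swap)
    also have "(\<Sum>j<N. \<Sum>m<N. if m < j then H m j else 0) + (\<Sum>m<N. \<Sum>j<N. if j < m then H m j else 0)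
       = (\<Sum>j<N. \<Sum>m<N. (if m < j then H m j else 0) + (if m < j then H j m else 0))"
      by (rule dsum_distrib[symmetric])
    also have "\<dots> = (\<Sum>j<N. \<Sum>m<N. if m < j \<and> R m \<and> R j then G m j else 0)"
    proof (intro sum.cong refl)
      fix j m assume j: "j \<in> {..<N}" and m: "m \<in> {..<N}"
      show "(if m < j then H m j else 0) + (if m < j then H j m else 0) = (if m < j \<and> R m \<and> R j then G m j else 0)"
      proof (cases "m < j \<and> R m \<and> R j")
        case True
        have "rank D m < rank D (Suc m)" "rank D j < rank D (Suc j)"
          using True j m red_pos[OF g] by (auto simp: R_def N_def)
        from pair_id[OF this] have "F' m j + F' j m = G m j"
          using True unfolding F'_def G_def by simp
        then show ?thesis using True H_true_case[of H R F' m j G] H_def by blast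
      next
        case False
        then show ?thesis using H_false_case[of H R F' m j G] H_def by blast
      qed
    qed
    finally show ?thesis .
  qed
  show ?thesis
    unfolding dinv_def using sd rd ar sym by simp
qed




definition rho :: "step list \<Rightarrow> nat list" where
  "rho D = filter (\<lambda>m. is_red (D!m)) (sxs D)"

definition Rl :: "step list \<Rightarrow> nat \<Rightarrow> nat" where
  "Rl D i = card {m. m < length D \<and> is_red (D!m) \<and> rank D m \<le> int i}"

definition Bl :: "step list \<Rightarrow> nat \<Rightarrow> nat" where
  "Bl D i = card {m. m < length D \<and> D!m = Blue \<and> rank D m \<le> int i}"

lemma red_lengths_sweep: "red_lengths (sweep D) = map (\<lambda>m. len (D!m)) (rho D)"
  by (simp add: red_lengths_conv sweep_sxs rho_def filter_map o_def)

lemma rho_distinct: "distinct (rho D)" by (simp add: rho_def sxs_distinct)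
lemma rho_set: "set (rho D) = {m. m < length D \<and> is_red (D!m)}" by (auto simp: rho_def)
lemma rho_len: "length (rho D) = card {m. m < length D \<and> is_red (D!m)}"
  using distinct_card[OF rho_distinct, of D] rho_set[of D] by simp

lemma sxs_sorted_wrt: "sorted_wrt (\<lambda>x y. skey D x < skey D y) (sxs D)"
  by (auto simp: sorted_wrt_iff_nth_less intro: sxs_mono)

lemma rho_mono: assumes "p < q" "q < length (rho D)" shows "skey D (rho D ! p) < skey D (rho D ! q)"
proof -
  have "sorted_wrt (\<lambda>x y. skey D x < skey D y) (rho D)"
    unfolding rho_def by (rule sorted_wrt_filter[OF sxs_sorted_wrt])
  then show ?thesis using assms by (auto simp: sorted_wrt_iff_nth_less)
qed

lemma rho_rank_mono: assumes "p \<le> q" "q < length (rho D)" shows "rank D (rho D ! p) \<le> rank D (rho D ! q)"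
proof (cases "p = q")
  case False
  then have "skey D (rho D ! p) < skey D (rho D ! q)" using assms rho_mono by simp
  then show ?thesis by (auto simp: skey_def less_prod_def)
qed simp

lemma rho_in: "j < length (rho D) \<Longrightarrow> rho D ! j < length D \<and> is_red (D ! (rho D ! j))"
  using nth_mem[of j "rho D"] rho_set[of D] by auto

lemma Rl_le: "Rl D i \<le> length (rho D)"
  unfolding Rl_def rho_len by (rule card_mono) auto

lemma card_image_nth:
  assumes "distinct ys" "j \<le> length ys"
  shows "card ((!) ys ` {..<j}) = j"
proof -
  have "inj_on ((!) ys) {..<j}" using assms by (auto intro!: inj_on_nth)
  then show ?thesis by (simp add: card_image)
qed

lemma rho_Rl: assumes "j < length (rho D)" shows "j < Rl D i \<longleftrightarrow> rank D (rho D ! j) \<le> int i"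
proof
  assume j: "j < Rl D i"
  show "rank D (rho D ! j) \<le> int i"
  proof (rule ccontr)
    assume c: "\<not> ?thesis"
    have "{m. m < length D \<and> is_red (D!m) \<and> rank D m \<le> int i} \<subseteq> (!) (rho D) ` {..<j}"
    proof
      fix m assume m: "m \<in> {m. m < length D \<and> is_red (D!m) \<and> rank D m \<le> int i}"
      then have "m \<in> set (rho D)" using rho_set by auto
      then obtain p where p: "p < length (rho D)" "m = rho D ! p" by (auto simp: in_set_conv_nth)
      have "p < j"
      proof (rule ccontr)
        assume "\<not> p < j"
        then have "rank D (rho D ! j) \<le> rank D m" using rho_rank_mono[of j p D] p by simp
        then show False using m c by auto
      qed
      then show "m \<in> (!) (rho D) ` {..<j}" using p by auto
    qed
    then have "Rl D i \<le> card ((!) (rho D) ` {..<j})" unfolding Rl_def by (rule card_mono[rotated]) auto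
    also have "\<dots> = j" using card_image_nth[OF rho_distinct] assms by simp
    finally show False using j by simp
  qed
next
  assume r: "rank D (rho D ! j) \<le> int i"
  have "(!) (rho D) ` {..<Suc j} \<subseteq> {m. m < length D \<and> is_red (D!m) \<and> rank D m \<le> int i}"
  proof
    fix m assume "m \<in> (!) (rho D) ` {..<Suc j}"
    then obtain p where p: "p \<le> j" "m = rho D ! p" using less_Suc_eq_le by auto
    then have "rank D m \<le> rank D (rho D ! j)" using rho_rank_mono[of p j D] assms by simp
    then show "m \<in> {m. m < length D \<and> is_red (D!m) \<and> rank D m \<le> int i}"
      using r rho_in[of p D] p assms by auto
  qed
  then have "card ((!) (rho D) ` {..<Suc j}) \<le> Rl D i" unfolding Rl_def by (rule card_mono[rotated]) auto
  then show "j < Rl D i" using card_image_nth[OF rho_distinct, of "Suc j" D] assms by simp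
qed

lemma card_lt_sum: "card {m. m < (N::nat) \<and> P m} = (\<Sum>m<N. if P m then 1 else 0)"
  by (simp add: sum_filter_lt[symmetric])

lemma crossing:
  assumes g: "good D"
  shows "card {m. m < length D \<and> D!m = Blue \<and> rank D m = l}
       = card {m. m < length D \<and> is_red (D!m) \<and> rank D m < l \<and> l \<le> rank D (Suc m)}"
proof -
  define N where "N = length D"
  define \<phi> :: "int \<Rightarrow> int" where "\<phi> x = (if x \<ge> l then 1 else 0)" for x
  have rN: "rank D N = 0" using g by (simp add: good_def N_def)
  have t: "(\<Sum>m<N. \<phi> (rank D (Suc m)) - \<phi> (rank D m)) = 0"
    using telescope[of 0 N \<phi> D] rN by (simp add: lessThan_atLeast0)
  have pt: "\<phi> (rank D (Suc m)) - \<phi> (rank D m) =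
      (if is_red (D!m) \<and> rank D m < l \<and> l \<le> rank D (Suc m) then 1 else 0)
    - (if D!m = Blue \<and> rank D m = l then 1 else 0)" if "m < N" for m
  proof (cases "is_red (D!m)")
    case True
    then have "rank D m < rank D (Suc m)" using red_pos[OF g] that by (simp add: N_def)
    then show ?thesis using True by (auto simp: \<phi>_def)
  next
    case False
    then have "D!m = Blue" "rank D (Suc m) = rank D m - 1" using that by (auto simp: not_red_iff rank_Suc N_def)
    then show ?thesis by (auto simp: \<phi>_def)
  qed
  have "(\<Sum>m<N. (if is_red (D!m) \<and> rank D m < l \<and> l \<le> rank D (Suc m) then 1 else 0)
    - (if D!m = Blue \<and> rank D m = l then 1 else (0::int))) = 0"
    using t pt by simp
  then have "(\<Sum>m<N. if is_red (D!m) \<and> rank D m < l \<and> l \<le> rank D (Suc m) then 1 else (0::int))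
    = (\<Sum>m<N. if D!m = Blue \<and> rank D m = l then 1 else 0)"
    by (simp add: sum_subtractf)
  then have "int (card {m. m < N \<and> is_red (D!m) \<and> rank D m < l \<and> l \<le> rank D (Suc m)})
     = int (card {m. m < N \<and> D!m = Blue \<and> rank D m = l})"
    unfolding card_lt_sum by (simp add: of_nat_sum if_distrib[where f=int] cong: if_cong)
  then show ?thesis by (simp add: N_def)
qed




lemma filter_nth_pos:
  assumes "q < length L" "P (L!q)"
  shows "filter (\<lambda>m. P (L!m)) [0..<length L] ! length (filter (\<lambda>m. P (L!m)) [0..<q]) = q"
proof -
  have "[0..<length L] = [0..<q] @ [q..<length L]"
    using upt_add_eq_append[of 0 q "length L - q"] assms(1) by simp
  also have "[q..<length L] = q # [Suc q..<length L]" using assms(1) by (simp add: upt_conv_Cons)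
  finally show ?thesis using assms(2) by (simp add: nth_append)
qed

lemma len_filter_upt: "length (filter P [0..<q]) = card {p. p < q \<and> P p}"
  by (auto simp: length_filter_conv_card intro!: arg_cong[where f=card])

lemma len_filter_take: "q \<le> length L \<Longrightarrow> length (filter P (take q L)) = card {p. p < q \<and> P (L!p)}"
  by (auto simp: length_filter_conv_card min_def intro!: arg_cong[where f=card])

lemma card_filter_image: "inj_on f A \<Longrightarrow> card {x \<in> f ` A. P x} = card {a \<in> A. P (f a)}"
proof -
  assume inj: "inj_on f A"
  have "{x \<in> f ` A. P x} = f ` {a \<in> A. P (f a)}" by auto
  moreover have "inj_on f {a \<in> A. P (f a)}" using inj by (rule inj_on_subset) auto
  ultimately show ?thesis by (simp add: card_image)
qed

definition nblue :: "step list \<Rightarrow> nat" where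
  "nblue D = card {m. m < length D \<and> D!m = Blue}"

lemma Nred_Bl:
  assumes g: "good D" and lt: "Bl D i < nblue D"
  shows "Nred (sweep D) (Bl D i) = Rl D i"
proof -
  define N where "N = length D"
  define xs where "xs = sxs D"
  obtain m0 where m0: "m0 < N" "D!m0 = Blue" "rank D m0 > int i"
  proof (rule ccontr)
    assume "\<not> thesis"
    then have "{m. m < N \<and> D!m = Blue \<and> rank D m \<le> int i} = {m. m < N \<and> D!m = Blue}"
      using that by force
    then show False using lt by (simp add: Bl_def nblue_def N_def)
  qed
  define S where "S = {m. m < N \<and> rank D m \<ge> int i + 1}"
  have finS: "finite S" by (simp add: S_def)
  have m0S: "m0 \<in> S" using m0 by (simp add: S_def)
  define ms where "ms = Max S"
  have "S \<noteq> {}" using m0S by auto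
  then have msS: "ms \<in> S" using Max_in[OF finS] by (simp add: ms_def)
  have msmax: "m \<le> ms" if "m \<in> S" for m using finS that by (simp add: ms_def)
  have msN: "ms < N" and rms: "rank D ms \<ge> int i + 1" using msS by (auto simp: S_def)
  have rSuc: "rank D (Suc ms) \<le> int i"
  proof (cases "Suc ms < N")
    case True
    then have "Suc ms \<notin> S" using msmax by fastforce
    then show ?thesis using True by (simp add: S_def)
  next
    case False
    then have "Suc ms = N" using msN by simp
    then show ?thesis using g by (simp add: good_def N_def)
  qed
  have blue: "D!ms = Blue"
  proof (rule ccontr)
    assume "D!ms \<noteq> Blue"
    then have "is_red (D!ms)" by (simp add: not_red_iff[symmetric])
    then have "rank D ms < rank D (Suc ms)" using red_pos[OF g] msN by (simp add: N_def)
    then show False using rms rSuc by simp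
  qed
  have rms_eq: "rank D ms = int i + 1" using blue rSuc rms msN by (simp add: rank_Suc N_def)
  have key: "skey D m < skey D ms \<longleftrightarrow> rank D m \<le> int i" if "m < N" for m
  proof
    assume "skey D m < skey D ms"
    then have "rank D m < rank D ms \<or> (rank D m = rank D ms \<and> ms < m)" by (simp add: skey_less)
    moreover have "\<not> (rank D m = rank D ms \<and> ms < m)"
      using msmax[of m] that rms_eq by (auto simp: S_def)
    ultimately show "rank D m \<le> int i" using rms_eq by auto
  next
    assume "rank D m \<le> int i"
    then show "skey D m < skey D ms" using rms_eq by (simp add: skey_less)
  qed
  have "ms \<in> set xs" using msN by (simp add: xs_def N_def)
  then obtain q where q0: "q < length xs" "xs ! q = ms" by (meson in_set_conv_nth)
  then have q: "q < N" "xs ! q = ms" by (auto simp: xs_def N_def)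
  have img: "(!) xs ` {..<q} = {m. m < N \<and> rank D m \<le> int i}"
  proof -
    have "(!) xs ` {..<q} = {m \<in> set xs. skey D m < skey D (xs ! q)}"
      using prefix_image[of xs "skey D" q] sxs_distinct[of D] sxs_mono[of _ _ D] q
      by (simp add: xs_def N_def)
    also have "\<dots> = {m. m < N \<and> rank D m \<le> int i}" using key q by (auto simp: xs_def N_def)
    finally show ?thesis .
  qed
  have inj: "inj_on ((!) xs) {..<q}" using q sxs_distinct[of D] by (auto intro!: inj_on_nth simp: xs_def N_def)
  have phi: "sweep D ! p = D ! (xs ! p)" if "p < N" for p using that by (simp add: sweep_sxs xs_def N_def)
  have lphi: "length (sweep D) = N" by (simp add: sweep_sxs N_def)
  have cnt: "length (filter (\<lambda>m. sweep D ! m = Blue) [0..<q]) = Bl D i"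
  proof -
    have "length (filter (\<lambda>m. sweep D ! m = Blue) [0..<q]) = card {p. p < q \<and> D ! (xs ! p) = Blue}"
      unfolding len_filter_upt using q phi by (auto intro!: arg_cong[where f=card])
    also have "\<dots> = card {m \<in> (!) xs ` {..<q}. D ! m = Blue}"
      using card_filter_image[OF inj, of "\<lambda>m. D!m = Blue"] by (simp add: Collect_conj_eq lessThan_def)
    also have "\<dots> = Bl D i" unfolding img Bl_def N_def by (rule arg_cong[where f=card]) auto
    finally show ?thesis .
  qed
  have pos: "filter (\<lambda>m. sweep D ! m = Blue) [0..<length (sweep D)] ! Bl D i = q"
    using filter_nth_pos[of q "sweep D" "\<lambda>s. s = Blue"] q phi blue lphi cnt by simp
  have "Nred (sweep D) (Bl D i) = length (filter is_red (take q (sweep D)))"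
    unfolding Nred_def Let_def pos ..
  also have "\<dots> = card {p. p < q \<and> is_red (D ! (xs ! p))}"
    unfolding len_filter_take[OF order.strict_implies_order[OF q(1)[folded lphi]]]
    using q phi by (auto intro!: arg_cong[where f=card])
  also have "\<dots> = card {m \<in> (!) xs ` {..<q}. is_red (D ! m)}"
    using card_filter_image[OF inj, of "\<lambda>m. is_red (D!m)"] by (simp add: Collect_conj_eq lessThan_def)
  also have "\<dots> = Rl D i" unfolding img Rl_def N_def by (rule arg_cong[where f=card]) auto
  finally show ?thesis .
qed




lemma K_eq:
  assumes g: "good D"
  shows "sum_list (red_lengths (sweep D)) = nblue D"
proof -
  define N where "N = length D"
  have "sum_list (red_lengths (sweep D)) = (\<Sum>m\<in>set (rho D). len (D!m))"
    by (simp add: red_lengths_sweep sum_list_distinct_conv_sum_set rho_distinct)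
  also have "\<dots> = (\<Sum>m | m < N \<and> is_red (D!m). len (D!m))" by (simp add: rho_set N_def)
  also have "\<dots> = (\<Sum>m<N. if is_red (D!m) then len (D!m) else 0)" by (rule sum_filter_lt)
  finally have s1: "sum_list (red_lengths (sweep D)) = (\<Sum>m<N. if is_red (D!m) then len (D!m) else 0)" .
  have "0 = rank D N" using g by (simp add: good_def N_def)
  also have "\<dots> = (\<Sum>m<N. val (D!m))" by (simp add: rank_sum N_def)
  also have "\<dots> = (\<Sum>m<N. (if is_red (D!m) then int (len (D!m)) else 0) - (if D!m = Blue then 1 else 0))"
    by (rule sum.cong[OF refl]) (simp add: val_cases not_red_iff)
  also have "\<dots> = (\<Sum>m<N. (if is_red (D!m) then int (len (D!m)) else 0)) - (\<Sum>m<N. (if D!m = Blue then 1 else 0))"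
    by (rule sum_subtractf)
  also have "\<dots> = int (\<Sum>m<N. if is_red (D!m) then len (D!m) else 0) - int (nblue D)"
    unfolding nblue_def card_lt_sum by (simp add: of_nat_sum if_distrib[where f=int] N_def cong: if_cong)
  finally have "int (\<Sum>m<N. if is_red (D!m) then len (D!m) else 0) = int (nblue D)" by linarith
  then have "(\<Sum>m<N. if is_red (D!m) then len (D!m) else 0) = nblue D" by (simp only: of_nat_eq_iff)
  then show ?thesis using s1 by simp
qed

lemma Bl_mono: "i \<le> i' \<Longrightarrow> Bl D i \<le> Bl D i'"
  unfolding Bl_def by (rule card_mono) auto

lemma Rl_mono: "i \<le> i' \<Longrightarrow> Rl D i \<le> Rl D i'"
  unfolding Rl_def by (rule card_mono) auto

lemma Bl_0: "good D \<Longrightarrow> Bl D 0 = 0"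
proof -
  assume g: "good D"
  have "{m. m < length D \<and> D!m = Blue \<and> rank D m \<le> 0} = {}"
  proof (rule ccontr)
    assume "\<not> ?thesis"
    then obtain m where m: "m < length D" "D!m = Blue" "rank D m \<le> 0" by auto
    then have "rank D (Suc m) < 0" by (simp add: rank_Suc)
    moreover have "rank D (Suc m) \<ge> 0" using good_rank_nonneg[OF g, of "Suc m"] m(1) by simp
    ultimately show False by simp
  qed
  then show ?thesis by (simp add: Bl_def)
qed

lemma Bl_Suc: "Bl D (Suc i) = Bl D i + card {m. m < length D \<and> D!m = Blue \<and> rank D m = int i + 1}"
proof -
  have eq: "{m. m < length D \<and> D!m = Blue \<and> rank D m \<le> int (Suc i)} =
    {m. m < length D \<and> D!m = Blue \<and> rank D m \<le> int i} \<union> {m. m < length D \<and> D!m = Blue \<and> rank D m = int i + 1}"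
    by auto
  show ?thesis unfolding Bl_def by (subst eq, rule card_Un_disjoint) auto
qed

lemma nat_arith1:
  fixes r :: int
  assumes "0 \<le> r" "r \<le> int i" "int i + 1 \<le> r + int l"
  shows "nat r \<le> Suc i \<and> Suc i \<le> nat r + l"
proof -
  obtain n where "r = int n" using assms(1) nonneg_eq_int by blast
  then show ?thesis using assms by simp
qed

definition Tf :: "step list \<Rightarrow> nat \<Rightarrow> nat \<Rightarrow> nat" where
  "Tf D i j = (if j < Rl D i then nat (rank D (rho D ! j)) else 0)"

lemma h_lemma:
  assumes g: "good D"
  shows "card {j. j < Rl D i \<and> Tf D i j \<le> Suc i \<and> Suc i \<le> Tf D i j + red_lengths (sweep D) ! j}
     = card {m. m < length D \<and> D!m = Blue \<and> rank D m = int i + 1}"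
proof -
  define \<rho> where "\<rho> = rho D"
  define Q where "Q m = (rank D m \<le> int i \<and> int i + 1 \<le> rank D (Suc m))" for m
  have "{j. j < Rl D i \<and> Tf D i j \<le> Suc i \<and> Suc i \<le> Tf D i j + red_lengths (sweep D) ! j}
      = {j \<in> {..<length \<rho>}. Q (\<rho> ! j)}"
  proof (intro equalityI subsetI)
    fix j assume j: "j \<in> {j. j < Rl D i \<and> Tf D i j \<le> Suc i \<and> Suc i \<le> Tf D i j + red_lengths (sweep D) ! j}"
    then have jl: "j < length \<rho>" using Rl_le[of D i] by (auto simp: \<rho>_def)
    have r: "rank D (\<rho>!j) \<le> int i" using rho_Rl[of j D i] jl j by (simp add: \<rho>_def)
    have in_: "\<rho>!j < length D" "is_red (D!(\<rho>!j))" using rho_in[of j D] jl by (auto simp: \<rho>_def)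
    have nn: "rank D (\<rho>!j) \<ge> 0" using g in_ by (simp add: good_def)
    have e: "rank D (Suc (\<rho>!j)) = rank D (\<rho>!j) + int (len (D!(\<rho>!j)))" using in_ by (simp add: rank_Suc val_cases)
    have jR: "j < Rl D i" and s: "Suc i \<le> Tf D i j + red_lengths (sweep D) ! j" using j by auto
    have "Tf D i j = nat (rank D (\<rho>!j))" using jR by (simp add: Tf_def \<rho>_def)
    moreover have "red_lengths (sweep D) ! j = len (D!(\<rho>!j))" using jl by (simp add: red_lengths_sweep \<rho>_def)
    ultimately have "Suc i \<le> nat (rank D (\<rho>!j)) + len (D!(\<rho>!j))" using s by simp
    then show "j \<in> {j \<in> {..<length \<rho>}. Q (\<rho> ! j)}" using jl r e nn by (simp add: Q_def)
  next
    fix j assume j: "j \<in> {j \<in> {..<length \<rho>}. Q (\<rho> ! j)}"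
    then have jl: "j < length \<rho>" by simp
    have r: "rank D (\<rho>!j) \<le> int i" using j by (simp add: Q_def)
    then have jR: "j < Rl D i" using rho_Rl[of j D i] jl by (simp add: \<rho>_def)
    have in_: "\<rho>!j < length D" "is_red (D!(\<rho>!j))" using rho_in[of j D] jl by (auto simp: \<rho>_def)
    have nn: "rank D (\<rho>!j) \<ge> 0" using g in_ by (simp add: good_def)
    have e: "rank D (Suc (\<rho>!j)) = rank D (\<rho>!j) + int (len (D!(\<rho>!j)))" using in_ by (simp add: rank_Suc val_cases)
    have "int i + 1 \<le> rank D (Suc (\<rho>!j))" using j by (simp add: Q_def)
    then show "j \<in> {j. j < Rl D i \<and> Tf D i j \<le> Suc i \<and> Suc i \<le> Tf D i j + red_lengths (sweep D) ! j}"
      using jR jl r e nn by (simp add: Tf_def red_lengths_sweep \<rho>_def) (rule nat_arith1; linarith)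
  qed
  then have "card {j. j < Rl D i \<and> Tf D i j \<le> Suc i \<and> Suc i \<le> Tf D i j + red_lengths (sweep D) ! j}
      = card {m \<in> (!) \<rho> ` {..<length \<rho>}. Q m}"
    using card_filter_image[of "(!) \<rho>" "{..<length \<rho>}" Q] rho_distinct[of D]
    by (simp add: inj_on_nth \<rho>_def)
  also have "(!) \<rho> ` {..<length \<rho>} = {m. m < length D \<and> is_red (D!m)}"
    using bij_betw_nth[OF rho_distinct[of D], of "{..<length \<rho>}" "set \<rho>"] rho_set[of D]
    by (simp add: bij_betw_def \<rho>_def)
  also have "{m \<in> {m. m < length D \<and> is_red (D!m)}. Q m}
     = {m. m < length D \<and> is_red (D!m) \<and> rank D m < int i + 1 \<and> int i + 1 \<le> rank D (Suc m)}"
    by (auto simp: Q_def)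
  also have "card \<dots> = card {m. m < length D \<and> D!m = Blue \<and> rank D m = int i + 1}"
    using crossing[OF g, of "int i + 1"] by simp
  finally show ?thesis .
qed




lemma Bl_le: "Bl D i \<le> nblue D"
  unfolding Bl_def nblue_def by (rule card_mono) auto

lemma Tf_0: "good D \<Longrightarrow> Tf D 0 = (\<lambda>j. 0)"
proof
  fix j assume g: "good D"
  show "Tf D 0 j = 0"
  proof (cases "j < Rl D 0")
    case True
    then have jl: "j < length (rho D)" using Rl_le[of D 0] by simp
    then have "rank D (rho D ! j) \<le> 0" using rho_Rl[of j D 0] True by simp
    then show ?thesis using True by (simp add: Tf_def)
  qed (simp add: Tf_def)
qed

lemma Tf_step:
  assumes g: "good D"
  shows "(\<lambda>j. if Rl D i \<le> j \<and> j < Rl D (Suc i) then Suc i else Tf D i j) = Tf D (Suc i)"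
proof
  fix j
  have mono: "Rl D i \<le> Rl D (Suc i)" by (rule Rl_mono) simp
  show "(if Rl D i \<le> j \<and> j < Rl D (Suc i) then Suc i else Tf D i j) = Tf D (Suc i) j"
  proof (cases "Rl D i \<le> j \<and> j < Rl D (Suc i)")
    case True
    then have jl: "j < length (rho D)" using Rl_le[of D "Suc i"] by simp
    have "rank D (rho D ! j) \<le> int (Suc i)" using rho_Rl[of j D "Suc i"] True jl by simp
    moreover have "\<not> rank D (rho D ! j) \<le> int i" using rho_Rl[of j D i] True jl by simp
    ultimately have "rank D (rho D ! j) = int (Suc i)" by simp
    then show ?thesis using True by (simp add: Tf_def)
  next
    case False
    show ?thesis
    proof (cases "j < Rl D i")
      case True
      then show ?thesis using False mono by (simp add: Tf_def)
    next
      case False2: False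
      then show ?thesis using False by (simp add: Tf_def)
    qed
  qed
qed

lemma inv:
  assumes g: "good D"
  shows "Bl D i < nblue D \<Longrightarrow> bstate (sweep D) i = (False, Bl D i, Rl D i, Tf D i)"
proof (induction i)
  case 0
  have "Nred (sweep D) 0 = Rl D 0" using Nred_Bl[OF g, of 0] 0 Bl_0[OF g] by simp
  then show ?case using Bl_0[OF g] Tf_0[OF g] by simp
next
  case (Suc i)
  have lt: "Bl D i < nblue D" using Suc.prems Bl_mono[of i "Suc i" D] by simp
  have IH: "bstate (sweep D) i = (False, Bl D i, Rl D i, Tf D i)" using Suc.IH lt by simp
  have h: "card {j. j < Rl D i \<and> Tf D i j \<le> Suc i \<and> Suc i \<le> Tf D i j + red_lengths (sweep D) ! j}
     = card {m. m < length D \<and> D!m = Blue \<and> rank D m = int i + 1}" by (rule h_lemma[OF g])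
  have x': "Bl D i + card {m. m < length D \<and> D!m = Blue \<and> rank D m = int i + 1} = Bl D (Suc i)"
    by (simp add: Bl_Suc)
  have K: "sum_list (red_lengths (sweep D)) = nblue D" by (rule K_eq[OF g])
  have N: "Nred (sweep D) (Bl D (Suc i)) = Rl D (Suc i)" by (rule Nred_Bl[OF g Suc.prems])
  show ?case
    using IH h x' K N Suc.prems Tf_step[OF g, of i] by (simp add: Let_def)
qed

lemma all_reds_low:
  assumes g: "good D" and full: "Bl D (Suc i) = nblue D"
  and m: "m < length D" "is_red (D!m)"
  shows "rank D m \<le> int i"
proof (rule ccontr)
  assume c: "\<not> ?thesis"
  define l where "l = rank D m + 1"
  have "rank D m < rank D (Suc m)" using red_pos[OF g] m by simp
  then have "m \<in> {m. m < length D \<and> is_red (D!m) \<and> rank D m < l \<and> l \<le> rank D (Suc m)}"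
    using m by (simp add: l_def)
  then have "{m. m < length D \<and> is_red (D!m) \<and> rank D m < l \<and> l \<le> rank D (Suc m)} \<noteq> {}" by blast
  then have "card {m. m < length D \<and> is_red (D!m) \<and> rank D m < l \<and> l \<le> rank D (Suc m)} \<noteq> 0"
    by simp
  then have "card {m. m < length D \<and> D!m = Blue \<and> rank D m = l} \<noteq> 0" using crossing[OF g, of l] by simp
  then have "{m. m < length D \<and> D!m = Blue \<and> rank D m = l} \<noteq> {}" by (metis card.empty)
  then obtain m' where m': "m' < length D" "D!m' = Blue" "rank D m' = l" by blast
  have nin: "m' \<notin> {m. m < length D \<and> D!m = Blue \<and> rank D m \<le> int (Suc i)}"
    using m'(3) c by (simp add: l_def)
  have sub: "{m. m < length D \<and> D!m = Blue \<and> rank D m \<le> int (Suc i)} \<subseteq> {m. m < length D \<and> D!m = Blue}"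
    by blast
  have "{m. m < length D \<and> D!m = Blue \<and> rank D m \<le> int (Suc i)} \<subset> {m. m < length D \<and> D!m = Blue}"
    using sub nin m'(1,2) by blast
  then have "Bl D (Suc i) < nblue D" unfolding Bl_def nblue_def by (rule psubset_card_mono[rotated]) simp
  then show False using full by simp
qed




lemma part2:
  assumes g: "good D"
  shows "area D = bounce (sweep D)"
proof (cases "nblue D = 0")
  case True
  have "{m. m < length D \<and> is_red (D!m)} = {}"
  proof (rule ccontr)
    assume "\<not> ?thesis"
    then obtain m where m: "m < length D" "is_red (D!m)" by auto
    have "sum_list (red_lengths (sweep D)) = (\<Sum>m\<in>set (rho D). len (D!m))"
      by (simp add: red_lengths_sweep sum_list_distinct_conv_sum_set rho_distinct)
    also have "\<dots> \<ge> len (D!m)" using m rho_set[of D] by (intro member_le_sum) auto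
    finally have "len (D!m) = 0" using K_eq[OF g] True by simp
    moreover have "0 < len (D!m)" using g m unfolding good_def by blast
    ultimately show False by simp
  qed
  moreover have "{m. m < length D \<and> D!m = Blue} = {}" using True by (simp add: nblue_def)
  ultimately have "D = []"
    by (metis (mono_tags, lifting) empty_Collect_eq length_greater_0_conv not_red_iff)
  then show ?thesis by (simp add: area_def bounce_def sweep_def red_lengths_def split: prod.splits)
next
  case False
  define N where "N = length D"
  have Npos: "N > 0" using False by (auto simp: nblue_def N_def)
  define M where "M = Max (rank D ` {..<N})"
  have rM: "rank D m \<le> int (nat M)" if "m < N" for m
  proof -
    have "rank D m \<le> M" unfolding M_def using that by (intro Max_ge) auto
    then show ?thesis by linarith
  qed
  have ex: "Bl D (nat M) = nblue D"
    unfolding Bl_def nblue_def using rM by (intro arg_cong[where f=card]) (auto simp: N_def)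
  define i0 where "i0 = (LEAST i. Bl D i = nblue D)"
  have i0: "Bl D i0 = nblue D" using ex unfolding i0_def by (rule LeastI)
  have below: "Bl D i < nblue D" if "i < i0" for i
  proof -
    have "Bl D i \<noteq> nblue D" using that not_less_Least[of i "\<lambda>i. Bl D i = nblue D"] by (simp add: i0_def)
    then show ?thesis using Bl_le[of D i] by simp
  qed
  have "i0 \<noteq> 0" using i0 Bl_0[OF g] False by (metis)
  then obtain i1 where i1: "i0 = Suc i1" by (cases i0) auto
  have st1: "bstate (sweep D) i1 = (False, Bl D i1, Rl D i1, Tf D i1)" using inv[OF g below[of i1]] i1 by simp
  have h: "card {j. j < Rl D i1 \<and> Tf D i1 j \<le> Suc i1 \<and> Suc i1 \<le> Tf D i1 j + red_lengths (sweep D) ! j}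
     = card {m. m < length D \<and> D!m = Blue \<and> rank D m = int i1 + 1}" by (rule h_lemma[OF g])
  have x': "Bl D i1 + card {m. m < length D \<and> D!m = Blue \<and> rank D m = int i1 + 1} = Bl D (Suc i1)"
    by (simp add: Bl_Suc)
  have K: "sum_list (red_lengths (sweep D)) = nblue D" by (rule K_eq[OF g])
  have st0: "bstate (sweep D) i0 = (True, Bl D i0, Rl D i1, Tf D i1)"
    using st1 h x' K i0 i1 by (simp add: Let_def)
  have least: "(LEAST i. fst (bstate (sweep D) i)) = i0"
  proof (rule Least_equality)
    show "fst (bstate (sweep D) i0)" using st0 by simp
  next
    fix i assume "fst (bstate (sweep D) i)"
    then show "i0 \<le> i" using inv[OF g below] by (metis fst_conv not_le)
  qed
  have full: "Bl D (Suc i1) = nblue D" using i0 i1 by simp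
  have Rl_full: "Rl D i1 = length (rho D)"
  proof -
    have "{m. m < length D \<and> is_red (D!m) \<and> rank D m \<le> int i1} = {m. m < length D \<and> is_red (D!m)}"
      using all_reds_low[OF g full] by auto
    then show ?thesis by (simp add: Rl_def rho_len)
  qed
  have "bounce (sweep D) = int (\<Sum>j<length (rho D). Tf D i1 j)"
    using least st0 by (simp add: bounce_def red_lengths_sweep)
  also have "\<dots> = (\<Sum>j<length (rho D). rank D (rho D ! j))"
  proof -
    have "int (Tf D i1 j) = rank D (rho D ! j)" if "j < length (rho D)" for j
    proof -
      have "rho D ! j < length D" using rho_in[OF that] by simp
      then have "rank D (rho D ! j) \<ge> 0" using g by (simp add: good_def)
      then show ?thesis using that Rl_full by (simp add: Tf_def)
    qed
    then show ?thesis by (simp add: of_nat_sum)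
  qed
  also have "\<dots> = (\<Sum>m\<in>set (rho D). rank D m)"
  proof -
    have "inj_on ((!) (rho D)) {..<length (rho D)}" using rho_distinct[of D] by (auto intro!: inj_on_nth)
    moreover have "(!) (rho D) ` {..<length (rho D)} = set (rho D)"
      using bij_betw_nth[OF rho_distinct[of D], of "{..<length (rho D)}" "set (rho D)"] by (simp add: bij_betw_def)
    ultimately show ?thesis by (metis (no_types, lifting) sum.reindex_cong)
  qed
  also have "\<dots> = area D" by (simp add: area_def rho_set)
  finally show ?thesis by simp
qed



theorem theorem2p1:
  fixes ks :: "nat list" and Dbar :: "step list"
  assumes "\<forall>k \<in> set ks. k > 0"
    and "Dbar \<in> Dyck_K ks"
  shows "dinv Dbar = area (sweep Dbar) \<and> area Dbar = bounce (sweep Dbar)"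
  using part1[OF good_of_Dyck[OF assms]] part2[OF good_of_Dyck[OF assms]] by simp

end
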